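(* Let $X$ be a finite set with $|X|=n$, $0\notin X$, $W=X\cup\{0\}$. Let $\mathfrak{V}$ be a $\big(\binom{n}{2}_{\,n-2}\ \binom{n}{3}_{\,3}\big)$-configuration whose point set is $\mathcal{P}_2(X)$, and let $\mathfrak{M}$ be the structure with point set $\mathcal{P}_2(W)$ whose lines are the lines of $\mathfrak{V}$ together with all sets $\{\{0,x\},\{0,y\},\{x,y\}\}$ for distinct $x,y\in X$. Let $H$ be a hyperplane of $\mathfrak{M}$, and on $X$ define the equivalence relation $x\sim y$ iff $x=y$, or $x\neq y$ and $\{x,y\}\in H$. If $\mathfrak{a},\mathfrak{b}$ are equivalence classes of $\sim$ with $\{0,x\}\in H$ for all $x\in\mathfrak{a}\cup\mathfrak{b}$, then $\mathfrak{a}=\mathfrak{b}$.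
   Context: $\mathcal{P}_2(Y)$ denotes the set of $2$-element subsets of $Y$. A $(v_r\ b_k)$-configuration is a partial linear space with $v$ points and $b$ lines, each point on exactly $r$ lines and each line containing exactly $k$ points. A subspace is a set of points containing every line that meets it in at least two points; a hyperplane is a proper subspace meeting every line. (A point $x\in X$ is identified with the point $\{0,x\}$, so "$\mathfrak{a}\subseteq H$" means $\{0,x\}\in H$ for all $x\in\mathfrak{a}$.) *)

theory Defs
  imports Main
begin

definition P2 :: "'a set \<Rightarrow> 'a set set" where
  "P2 Y = {A. A \<subseteq> Y \<and> card A = 2}"

definition partial_linear_space :: "'p set \<Rightarrow> 'p set set \<Rightarrow> bool" where
  "partial_linear_space P L \<longleftrightarrow>
     (\<forall>l\<in>L. l \<subseteq> P \<and> finite l \<and> card l \<ge> 2) \<and>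
     (\<forall>p\<in>P. \<forall>q\<in>P. p \<noteq> q \<longrightarrow> card {l\<in>L. p \<in> l \<and> q \<in> l} \<le> 1)"

definition configuration ::
  "'p set \<Rightarrow> 'p set set \<Rightarrow> nat \<Rightarrow> nat \<Rightarrow> nat \<Rightarrow> nat \<Rightarrow> bool" where
  "configuration P L v r b k \<longleftrightarrow>
     partial_linear_space P L \<and> finite P \<and> finite L \<and>
     card P = v \<and> card L = b \<and>
     (\<forall>p\<in>P. card {l\<in>L. p \<in> l} = r) \<and>
     (\<forall>l\<in>L. card l = k)"

definition subspace :: "'p set \<Rightarrow> 'p set set \<Rightarrow> 'p set \<Rightarrow> bool" where
  "subspace P L S \<longleftrightarrow> S \<subseteq> P \<and>
     (\<forall>l\<in>L. (\<exists>p q. p \<noteq> q \<and> p \<in> l \<inter> S \<and> q \<in> l \<inter> S) \<longrightarrow> l \<subseteq> S)"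

definition hyperplane :: "'p set \<Rightarrow> 'p set set \<Rightarrow> 'p set \<Rightarrow> bool" where
  "hyperplane P L H \<longleftrightarrow> subspace P L H \<and> H \<noteq> P \<and> (\<forall>l\<in>L. l \<inter> H \<noteq> {})"

definition ext_lines :: "'a \<Rightarrow> 'a set \<Rightarrow> 'a set set set \<Rightarrow> 'a set set set" where
  "ext_lines z X LV = LV \<union>
     {{{z, x}, {z, y}, {x, y}} | x y. x \<in> X \<and> y \<in> X \<and> x \<noteq> y}"

definition hrel :: "'a set \<Rightarrow> 'a set set \<Rightarrow> 'a rel" where
  "hrel X H = {(x, y). x \<in> X \<and> y \<in> X \<and> (x = y \<or> (x \<noteq> y \<and> {x, y} \<in> H))}"

end

theory Submission
  imports Defs
begin

lemma l1: "u \<in> X \<Longrightarrow> v \<in> X \<Longrightarrow> u \<noteq> v \<Longrightarrow> {{z, u}, {z, v}, {u, v}} \<in> ext_lines z X LV"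
    unfolding ext_lines_def by (intro UnI2) auto
lemma l2: "z \<notin> X \<Longrightarrow> u \<in> X \<Longrightarrow> u \<noteq> v \<Longrightarrow> {z,u} \<noteq> {z,v}" by (auto simp: doubleton_eq_iff)
lemma l3: "subspace P L H \<Longrightarrow> l \<in> L \<Longrightarrow> p \<noteq> q \<Longrightarrow> p \<in> l \<Longrightarrow> q \<in> l \<Longrightarrow> p \<in> H \<Longrightarrow> q \<in> H \<Longrightarrow> l \<subseteq> H"
  unfolding subspace_def by (meson IntI)
lemma key:
  assumes "hyperplane P (ext_lines z X LV) H" and "z \<notin> X"
    and "u \<in> X" "v \<in> X" "u \<noteq> v" "{z,u} \<in> H" "{z,v} \<in> H"
  shows "{u,v} \<in> H"
proof -
  from assms(1) have sp: "subspace P (ext_lines z X LV) H" by (simp add: hyperplane_def)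
  have "{{z, u}, {z, v}, {u, v}} \<subseteq> H"
    by (rule l3[OF sp l1[OF assms(3,4,5)] l2[OF assms(2,3,5)] _ _ assms(6,7)]) simp_all
  thus ?thesis by simp
qed

lemma sub:
  assumes "hyperplane P (ext_lines z X LV) H" and "z \<notin> X"
    and "x \<in> X" "y \<in> X"
    and "\<forall>w\<in>hrel X H `` {x} \<union> hrel X H `` {y}. {z, w} \<in> H"
  shows "hrel X H `` {x} \<subseteq> hrel X H `` {y}"
proof
  fix w assume w: "w \<in> hrel X H `` {x}"
  hence wX: "w \<in> X" by (auto simp: hrel_def)
  have "y \<in> hrel X H `` {y}" using assms by (auto simp: hrel_def)
  hence zy: "{z,y} \<in> H" using assms by blast
  have zw: "{z,w} \<in> H" using assms w by blast
  show "w \<in> hrel X H `` {y}"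
  proof (cases "w = y")
    case True thus ?thesis using assms by (auto simp: hrel_def)
  next
    case False
    have "{y,w} \<in> H" using key[OF assms(1,2) assms(4) wX] False zy zw by metis
    thus ?thesis using False assms wX by (auto simp: hrel_def)
  qed
qed

theorem lemma3p3:
  fixes X :: "'a set" and z :: 'a and n :: nat
    and LV :: "'a set set set" and H :: "'a set set" and A B :: "'a set"
  assumes "finite X" and "card X = n" and "z \<notin> X"
    and "configuration (P2 X) LV (n choose 2) (n - 2) (n choose 3) 3"
    and "hyperplane (P2 (insert z X)) (ext_lines z X LV) H"
    and "A \<in> X // hrel X H" and "B \<in> X // hrel X H"
    and "\<forall>x\<in>A \<union> B. {z, x} \<in> H"
  shows "A = B"
proof -
  obtain x where x: "x \<in> X" "A = hrel X H `` {x}" using assms(6) by (auto simp: quotient_def)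
  obtain y where y: "y \<in> X" "B = hrel X H `` {y}" using assms(7) by (auto simp: quotient_def)
  have "A \<subseteq> B" using sub[OF assms(5,3) x(1) y(1)] assms(8) x y by blast
  moreover have "B \<subseteq> A" using sub[OF assms(5,3) y(1) x(1)] assms(8) x y by blast
  ultimately show ?thesis by blast
qed

end
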